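(* Let $\widehat n\ge1$ be an integer and define $\theta_0=1/\widehat n$, $\theta_{k+1}=\frac{\sqrt{\theta_k^4+4\theta_k^2}-\theta_k^2}{2}$ for $k\ge0$, so that $\frac{1-\theta_k}{\theta_k^2}=\frac{1}{\theta_{k-1}^2}$ for all $k\ge0$, with the convention $\frac{1}{\theta_{-1}^2}=\widehat n^2-\widehat n$. Then: (1) $0\le\theta_k\le\theta_{k-1}\le\cdots\le\theta_1\le\theta_0=\frac1{\widehat n}$ for all $k\ge1$; (2) $\sum_{k=K_0}^K\frac1{\theta_k}=\frac1{\theta_K^2}-\frac1{\theta_{K_0-1}^2}$ for all integers $0\le K_0\le K$; (3) $\frac k2+\frac k{2\widehat n}+\widehat n\ge\frac1{\theta_k}\ge\frac k2+\widehat n$ for all $k\ge0$; (4) if $\upsilon>1$ and $K_0$ is a nonnegative integer with $K_0\le\left\lfloor\frac{K}{\upsilon(1+1/\widehat n)}+1\right\rfloor$, then $\frac1{\theta_K^2}-\frac1{\theta_{K_0-1}^2}\ge\left(\frac{K^2}4+\widehat nK\right)\left(1-\frac1\upsilon\right)$. *)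

theory Defs
  imports Complex_Main
begin

fun theta :: "nat \<Rightarrow> nat \<Rightarrow> real" where
  "theta nh 0 = 1 / real nh"
| "theta nh (Suc k) = (sqrt (theta nh k ^ 4 + 4 * theta nh k ^ 2) - theta nh k ^ 2) / 2"

definition inv_sq_prev :: "nat \<Rightarrow> nat \<Rightarrow> real" where
  "inv_sq_prev nh k = (if k = 0 then real nh ^ 2 - real nh else 1 / theta nh (k - 1) ^ 2)"

end

theory Submission
  imports Defs
begin

declare theta.simps(2)[simp del]

lemma th_pos: assumes "nh \<ge> 1" shows "theta nh k > 0"
proof (induction k)
  case 0 then show ?case using assms by simp
next
  case (Suc k)
  let ?t = "theta nh k"
  have "sqrt (?t ^ 4) < sqrt (?t ^ 4 + 4 * ?t ^ 2)" using Suc by simp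
  moreover have "sqrt (?t ^ 4) = ?t ^ 2"
  proof -
    have "?t ^ 4 = (?t^2)^2" by simp
    thus ?thesis by (metis real_sqrt_abs abs_power2 power2_abs)
  qed
  ultimately show ?case by (simp add: theta.simps(2))
qed

lemma th_rec: assumes "nh \<ge> 1"
  shows "theta nh (Suc k) ^ 2 + theta nh (Suc k) * theta nh k ^ 2 = theta nh k ^ 2"
proof -
  let ?t = "theta nh k" and ?s = "theta nh (Suc k)"
  have q: "sqrt (?t ^ 4 + 4 * ?t ^ 2) ^ 2 = ?t ^ 4 + 4 * ?t ^ 2" by simp
  have "2 * ?s + ?t ^ 2 = sqrt (?t ^ 4 + 4 * ?t ^ 2)" unfolding theta.simps(2) by (simp add: field_simps)
  hence "(2 * ?s + ?t ^ 2) ^ 2 = ?t ^ 4 + 4 * ?t ^ 2" using q by simp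
  thus ?thesis by (simp add: algebra_simps power2_eq_square power4_eq_xxxx)
qed

lemma a_rec: assumes "nh \<ge> 1"
  shows "(1 / theta nh (Suc k)) ^ 2 - 1 / theta nh (Suc k) = (1 / theta nh k) ^ 2"
proof -
  let ?t = "theta nh k" and ?s = "theta nh (Suc k)"
  have p: "?t > 0" "?s > 0" using th_pos assms by auto
  have "?s ^ 2 + ?s * ?t ^ 2 = ?t ^ 2" by (rule th_rec[OF assms])
  with p show ?thesis by (simp add: field_simps power2_eq_square)
qed

lemma L2: assumes "nh \<ge> 1"
  shows "(1 - theta nh k) / theta nh k ^ 2 = inv_sq_prev nh k"
proof (cases k)
  case 0 then show ?thesis using assms by (simp add: inv_sq_prev_def field_simps power2_eq_square)
next
  case (Suc j)
  have p: "theta nh k > 0" using th_pos assms by auto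
  have "(1 - theta nh k) / theta nh k ^ 2 = (1 / theta nh k) ^ 2 - 1 / theta nh k"
    using p by (simp add: field_simps power2_eq_square)
  also have "\<dots> = inv_sq_prev nh k" using a_rec[OF assms, of j] Suc by (simp add: inv_sq_prev_def power_one_over)
  finally show ?thesis .
qed

lemma a_step: assumes "nh \<ge> 1"
  shows "1 / theta nh k + 1/2 \<le> 1 / theta nh (Suc k)"
proof -
  define a where "a = 1 / theta nh k"
  define b where "b = 1 / theta nh (Suc k)"
  have a0: "a > 0" "b > 0" using th_pos assms a_def b_def by auto
  have r: "b^2 - b = a^2" using a_rec[OF assms, of k] a_def b_def by simp
  show ?thesis unfolding a_def[symmetric] b_def[symmetric]
  proof (rule ccontr)
    assume "\<not> a + 1/2 \<le> b"
    hence "b < a + 1/2" by simp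
    have "b * (b - 1) > 0" using r a0 by (simp add: power2_eq_square algebra_simps)
    hence "b > 1" using a0 by (simp add: zero_less_mult_iff)
    have "b * (b - 1) < (a + 1/2) * (a - 1/2)"
      using \<open>b < a + 1/2\<close> \<open>b > 1\<close> a0 by (intro mult_strict_mono) auto
    thus False using r by (simp add: power2_eq_square algebra_simps)
  qed
qed

lemma a_step2: assumes "nh \<ge> 1" "1 / theta nh k \<ge> real nh"
  shows "1 / theta nh (Suc k) \<le> 1 / theta nh k + 1/2 + 1 / (2 * real nh)"
proof -
  define a where "a = 1 / theta nh k"
  define b where "b = 1 / theta nh (Suc k)"
  define c where "c = 1/2 + 1 / (2 * real nh)"
  have n1: "real nh \<ge> 1" using assms by simp
  have a0: "a > 0" "b > 0" using th_pos assms a_def b_def by auto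
  have r: "b^2 - b = a^2" using a_rec[OF assms(1), of k] a_def b_def by simp
  have "a \<ge> real nh" using assms(2) a_def by simp
  hence an: "a / real nh \<ge> 1" using n1 by (simp add: le_divide_eq)
  have h1: "1/(2*real nh) \<le> 1/2" "1/(2*real nh) > 0" using n1 by (auto simp: field_simps)
  have c1: "c \<le> 1" "c > 1/2" using h1 c_def by linarith+
  have ce: "2 * c - 1 = 1 / real nh" using c_def by simp
  show ?thesis unfolding a_def[symmetric] b_def[symmetric] c_def[symmetric] add.assoc
  proof (rule ccontr)
    assume "\<not> b \<le> a + c"
    hence bc: "b > a + c" by simp
    have "b * (b - 1) > (a + c) * (a + c - 1)"
      using bc c1 a0 assms(2) n1 a_def by (intro mult_strict_mono) auto
    moreover have "(a + c) * (a + c - 1) = a^2 + a * (2*c - 1) + c * (c - 1)"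
      by (simp add: algebra_simps power2_eq_square)
    moreover have "a * (2*c - 1) \<ge> 1" using ce an by simp
    moreover have "c * (c - 1) \<ge> -1/4" proof -
      have "0 \<le> (c - 1/2)^2" by simp
      thus ?thesis by (simp add: power2_eq_square algebra_simps)
    qed
    ultimately show False using r by (simp add: power2_eq_square algebra_simps)
  qed
qed

lemma bounds: assumes "nh \<ge> 1"
  shows "real k / 2 + real nh \<le> 1 / theta nh k \<and> 1 / theta nh k \<le> real k / 2 + real k / (2 * real nh) + real nh"
proof (induction k)
  case 0 then show ?case using assms by simp
next
  case (Suc k)
  have l: "1 / theta nh k + 1/2 \<le> 1 / theta nh (Suc k)" by (rule a_step[OF assms])
  have "1 / theta nh k \<ge> real nh" using Suc by simp
  from a_step2[OF assms this] have u: "1 / theta nh (Suc k) \<le> 1 / theta nh k + 1/2 + 1 / (2 * real nh)" .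
  have e: "real (Suc k) / (2 * real nh) = real k / (2 * real nh) + 1 / (2 * real nh)"
    by (simp add: add_divide_distrib)
  have e2: "real (Suc k) / 2 = real k / 2 + 1/2" by simp
  show ?case using Suc.IH l u e e2 by linarith
qed

lemma telesc: assumes "nh \<ge> 1" "K0 \<le> K"
  shows "(\<Sum>k=K0..K. 1 / theta nh k) = 1 / theta nh K ^ 2 - inv_sq_prev nh K0"
  using assms(2)
proof (induction K rule: dec_induct)
  case base
  have p: "theta nh K0 > 0" using th_pos assms by auto
  have "1 / theta nh K0 = 1 / theta nh K0 ^ 2 - (1 - theta nh K0) / theta nh K0 ^ 2"
    using p by (simp add: field_simps power2_eq_square)
  then show ?case using L2[OF assms(1), of K0] by simp
next
  case (step n)
  have p: "theta nh (Suc n) > 0" using th_pos assms by auto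
  have "1 / theta nh (Suc n) = 1 / theta nh (Suc n) ^ 2 - (1 - theta nh (Suc n)) / theta nh (Suc n) ^ 2"
    using p by (simp add: field_simps power2_eq_square)
  also have "\<dots> = 1 / theta nh (Suc n) ^ 2 - 1 / theta nh n ^ 2"
    using L2[OF assms(1), of "Suc n"] by (simp add: inv_sq_prev_def)
  finally show ?case using step by simp
qed

theorem lemma2:
  fixes nh :: nat
  assumes "nh \<ge> 1"
  shows "(\<forall>k. (1 - theta nh k) / theta nh k ^ 2 = inv_sq_prev nh k)
    \<and> theta nh 0 = 1 / real nh
    \<and> (\<forall>k\<ge>1. 0 \<le> theta nh k \<and> theta nh k \<le> theta nh (k - 1))
    \<and> (\<forall>K0 K. K0 \<le> K \<longrightarrow>
          (\<Sum>k=K0..K. 1 / theta nh k) = 1 / theta nh K ^ 2 - inv_sq_prev nh K0)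
    \<and> (\<forall>k. real k / 2 + real k / (2 * real nh) + real nh \<ge> 1 / theta nh k
          \<and> 1 / theta nh k \<ge> real k / 2 + real nh)
    \<and> (\<forall>(\<upsilon>::real) K0 K. \<upsilon> > 1 \<longrightarrow>
          int K0 \<le> \<lfloor>real K / (\<upsilon> * (1 + 1 / real nh)) + 1\<rfloor> \<longrightarrow>
          1 / theta nh K ^ 2 - inv_sq_prev nh K0
            \<ge> (real K ^ 2 / 4 + real nh * real K) * (1 - 1 / \<upsilon>))"
proof (intro conjI allI impI)
  fix k show "(1 - theta nh k) / theta nh k ^ 2 = inv_sq_prev nh k" by (rule L2[OF assms])
next
  show "theta nh 0 = 1 / real nh" by simp
next
  fix k :: nat assume "k \<ge> 1"
  show "0 \<le> theta nh k" using th_pos[OF assms] less_imp_le by blast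
  obtain j where j: "k = Suc j" using \<open>k \<ge> 1\<close> by (cases k) auto
  have "1 / theta nh j \<le> 1 / theta nh (Suc j)" using a_step[OF assms, of j] by simp
  moreover have "theta nh j > 0" "theta nh (Suc j) > 0" using th_pos[OF assms] by auto
  ultimately show "theta nh k \<le> theta nh (k - 1)" using j by (metis le_imp_inverse_le inverse_eq_divide inverse_inverse_eq zero_less_divide_1_iff diff_Suc_1)
next
  fix K0 K :: nat assume "K0 \<le> K" thus "(\<Sum>k=K0..K. 1 / theta nh k) = 1 / theta nh K ^ 2 - inv_sq_prev nh K0"
    by (rule telesc[OF assms])
next
  fix k show "real k / 2 + real k / (2 * real nh) + real nh \<ge> 1 / theta nh k" using bounds[OF assms] by blast
next
  fix k show "1 / theta nh k \<ge> real k / 2 + real nh" using bounds[OF assms] by blast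
next
  fix v :: real and K0 K :: nat
  assume v: "v > 1" and K0: "int K0 \<le> \<lfloor>real K / (v * (1 + 1 / real nh)) + 1\<rfloor>"
  define c where "c = 1 + 1 / real nh"
  have n1: "real nh \<ge> 1" using assms by simp
  have c0: "c > 0" using c_def n1 by (simp add: add_pos_nonneg)
  have "real_of_int (int K0) \<le> real K / (v * c) + 1" using K0 c_def
    by (simp only: le_floor_iff)
  hence "real K0 \<le> real K / (v * c) + 1" by simp
  hence x: "(real K0 - 1) * c \<le> real K / v" using c0 v
    by (simp add: field_simps)
  have aK: "1 / theta nh K \<ge> real K / 2 + real nh" using bounds[OF assms] by blast
  hence aK2: "1 / theta nh K ^ 2 \<ge> (real K / 2 + real nh) ^ 2"
    by (simp add: power_mono power_one_over[symmetric])
  have bK0: "inv_sq_prev nh K0 \<le> (real K / (2 * v) + real nh) ^ 2"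
  proof (cases K0)
    case 0
    have "real nh ^ 2 \<le> (real K / (2 * v) + real nh) ^ 2" using v by (simp add: power_mono)
    then show ?thesis using 0 by (simp add: inv_sq_prev_def)
  next
    case (Suc j)
    have "1 / theta nh j \<le> real j / 2 + real j / (2 * real nh) + real nh" using bounds[OF assms] by blast
    also have "real j / 2 + real j / (2 * real nh) = real j * c / 2" using c_def by (simp add: field_simps)
    also have "real j * c / 2 \<le> real K / (2 * v)" using x Suc by simp
    finally have "1 / theta nh j \<le> real K / (2 * v) + real nh" by simp
    moreover have "theta nh j > 0" using th_pos[OF assms] by auto
    ultimately have "(1 / theta nh j) ^ 2 \<le> (real K / (2 * v) + real nh) ^ 2"
      by (simp add: power_mono)
    then show ?thesis using Suc by (simp add: inv_sq_prev_def power_one_over)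
  qed
  have "(real K ^ 2 / 4 + real nh * real K) * (1 - 1 / v) \<le> (real K / 2 + real nh) ^ 2 - (real K / (2 * v) + real nh) ^ 2"
  proof -
    have e: "(real K / 2 + real nh) ^ 2 - (real K / (2 * v) + real nh) ^ 2
       = real K ^ 2 / 4 * (1 - 1 / v ^ 2) + real nh * real K * (1 - 1 / v)"
      using v by (simp add: field_simps power2_eq_square)
    have "1 / v ^ 2 \<le> 1 / v" using v by (simp add: field_simps power2_eq_square)
    hence "real K ^ 2 / 4 * (1 - 1 / v) \<le> real K ^ 2 / 4 * (1 - 1 / v ^ 2)"
      by (intro mult_left_mono) auto
    thus ?thesis using e by (simp add: algebra_simps)
  qed
  thus "1 / theta nh K ^ 2 - inv_sq_prev nh K0 \<ge> (real K ^ 2 / 4 + real nh * real K) * (1 - 1 / v)"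
    using aK2 bK0 by linarith
qed

end
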